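(* For any simple undirected graph $G$ with $n$ vertices and $m$ edges, $$n_G(\mathcal{L}_4)=\sum_{\{st,uv\}\in Q}(a_{su}+a_{sv}+a_{tu}+a_{tv})=\frac12\sum_{s=1}^n\sum_{t\ne s}\big(a^{(3)}_{st}-a_{st}(2k_t-1)\big)=m_3+m_1-n\langle k^2\rangle .$$
   Context: $A=(a_{ij})$ is the adjacency matrix, $A^p=(a^{(p)}_{ij})$ its $p$-th power, $m_p=\sum_{s<t}a^{(p)}_{st}$ (so $m_1=m$), $k_s$ the degree of $s$, $\langle k^2\rangle=\frac1n\sum_s k_s^2$. $Q$ is the set of unordered pairs $\{st,uv\}$ of edges $st,uv\in E$ with $s,t,u,v$ pairwise distinct. $n_G(F)$ is the number of (not necessarily induced) subgraphs of $G$ isomorphic to $F$; $\mathcal{L}_4$ is the path on 4 vertices. *)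

theory Defs
  imports Main Complex_Main
begin

definition simple_graph :: "'a set \<Rightarrow> ('a \<Rightarrow> 'a \<Rightarrow> bool) \<Rightarrow> bool" where
  "simple_graph V E \<longleftrightarrow> finite V \<and> (\<forall>s t. E s t \<longrightarrow> E t s) \<and> (\<forall>s. \<not> E s s)
     \<and> (\<forall>s t. E s t \<longrightarrow> s \<in> V \<and> t \<in> V)"

definition edges :: "('a \<Rightarrow> 'a \<Rightarrow> bool) \<Rightarrow> 'a set set" where
  "edges E = {{s, t} | s t. E s t}"

definition adj :: "('a \<Rightarrow> 'a \<Rightarrow> bool) \<Rightarrow> 'a \<Rightarrow> 'a \<Rightarrow> real" where
  "adj E s t = (if E s t then 1 else 0)"

fun adjpow :: "'a set \<Rightarrow> ('a \<Rightarrow> 'a \<Rightarrow> bool) \<Rightarrow> nat \<Rightarrow> 'a \<Rightarrow> 'a \<Rightarrow> real" where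
  "adjpow V E 0 s t = (if s = t then 1 else 0)"
| "adjpow V E (Suc p) s t = (\<Sum>w\<in>V. adjpow V E p s w * adj E w t)"

definition mp :: "'a::linorder set \<Rightarrow> ('a \<Rightarrow> 'a \<Rightarrow> bool) \<Rightarrow> nat \<Rightarrow> real" where
  "mp V E p = (\<Sum>(s, t)\<in>{(s, t). s \<in> V \<and> t \<in> V \<and> s < t}. adjpow V E p s t)"

definition degree :: "'a set \<Rightarrow> ('a \<Rightarrow> 'a \<Rightarrow> bool) \<Rightarrow> 'a \<Rightarrow> nat" where
  "degree V E s = card {t \<in> V. E s t}"

definition mean_sq_degree :: "'a set \<Rightarrow> ('a \<Rightarrow> 'a \<Rightarrow> bool) \<Rightarrow> real" where
  "mean_sq_degree V E = (1 / real (card V)) * (\<Sum>s\<in>V. (real (degree V E s))^2)"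

definition Qpairs :: "('a \<Rightarrow> 'a \<Rightarrow> bool) \<Rightarrow> 'a set set set" where
  "Qpairs E = {{{s, t}, {u, v}} | s t u v. E s t \<and> E u v \<and>
                 s \<noteq> u \<and> s \<noteq> v \<and> t \<noteq> u \<and> t \<noteq> v}"

text \<open>The summand a_su + a_sv + a_tu + a_tv attached to {st,uv} in Q
  (independent of the labelling since E is symmetric).\<close>
definition cross :: "('a \<Rightarrow> 'a \<Rightarrow> bool) \<Rightarrow> 'a set set \<Rightarrow> real" where
  "cross E q = (SOME c. \<exists>s t u v. q = {{s, t}, {u, v}} \<and> E s t \<and> E u v \<and>
       s \<noteq> u \<and> s \<noteq> v \<and> t \<noteq> u \<and> t \<noteq> v \<and>
       c = adj E s u + adj E s v + adj E t u + adj E t v)"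

definition P4_subgraphs :: "'a set \<Rightarrow> ('a \<Rightarrow> 'a \<Rightarrow> bool) \<Rightarrow> ('a set \<times> 'a set set) set" where
  "P4_subgraphs V E = {(W, F). W \<subseteq> V \<and> F \<subseteq> edges E \<and>
      (\<exists>f. bij_betw f {0..<4::nat} W \<and> F = {{f i, f (Suc i)} | i. i < 3})}"

definition count_P4 :: "'a set \<Rightarrow> ('a \<Rightarrow> 'a \<Rightarrow> bool) \<Rightarrow> nat" where
  "count_P4 V E = card (P4_subgraphs V E)"

end

theory Submission imports Defs begin
lemma mid:
  assumes "a\<noteq>b" "a\<noteq>c" "a\<noteq>d" "b\<noteq>c" "b\<noteq>d" "c\<noteq>d"
    "e1 \<in> {{a,b},{b,c},{c,d}}" "e2 \<in> {{a,b},{b,c},{c,d}}" "e1 \<noteq> e2" "x \<in> e1" "x \<in> e2"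
  shows "x = b \<or> x = c"
  using assms by auto
lemma L1:
  assumes "a\<noteq>b" "a\<noteq>c" "a\<noteq>d" "b\<noteq>c" "b\<noteq>d" "c\<noteq>d"
   "a'\<noteq>b'" "a'\<noteq>c'" "a'\<noteq>d'" "b'\<noteq>c'" "b'\<noteq>d'" "c'\<noteq>d'"
   "{{a,b},{b,c},{c,d}} = {{a',b'},{b',c'},{c',d'}}"
 shows "(a',b',c',d') = (a,b,c,d) \<or> (a',b',c',d') = (d,c,b,a)"
proof -
  from assms(13) have m: "{a',b'} \<in> {{a,b},{b,c},{c,d}}" "{b',c'} \<in> {{a,b},{b,c},{c,d}}" "{c',d'} \<in> {{a,b},{b,c},{c,d}}"
    by auto
  have ne1: "{a',b'} \<noteq> {b',c'}" "{b',c'} \<noteq> {c',d'}" using assms(7-12) by (auto simp: doubleton_eq_iff)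
  have b': "b' = b \<or> b' = c" by (rule mid[OF assms(1-6) m(1) m(2) ne1(1)]) auto
  have c': "c' = b \<or> c' = c" by (rule mid[OF assms(1-6) m(2) m(3) ne1(2)]) auto
  show ?thesis
  proof (cases "b' = b")
    case True
    then have "c' = c" using c' assms(10) by auto
    then show ?thesis using m(1,3) True assms(1-12) by (auto simp: doubleton_eq_iff)
  next
    case False
    then have "b' = c" "c' = b" using b' c' assms(10) by auto
    then show ?thesis using m(1,3) assms(1-12) by (auto simp: doubleton_eq_iff)
  qed
qed
lemma L3:
  assumes "s\<noteq>t" "s\<noteq>u" "s\<noteq>v" "t\<noteq>u" "t\<noteq>v" "u\<noteq>v"
   "{{s,t},{u,v}} = {{s',t'},{u',v'}}"
 shows "(s',t',u',v') \<in> {(s,t,u,v),(t,s,u,v),(s,t,v,u),(t,s,v,u),(u,v,s,t),(v,u,s,t),(u,v,t,s),(v,u,t,s)}"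
proof -
  from assms(7) have m: "{s',t'} \<in> {{s,t},{u,v}}" "{u',v'} \<in> {{s,t},{u,v}}" "{s',t'} \<noteq> {u',v'}"
    using assms(1-6) by (auto simp: doubleton_eq_iff)
  from m(1) have "{s',t'} = {s,t} \<or> {s',t'} = {u,v}" by auto
  then show ?thesis
  proof
    assume h: "{s',t'} = {s,t}"
    then have "{u',v'} = {u,v}" using m by auto
    then show ?thesis using h by (auto simp: doubleton_eq_iff)
  next
    assume h: "{s',t'} = {u,v}"
    then have "{u',v'} = {s,t}" using m by auto
    then show ?thesis using h by (auto simp: doubleton_eq_iff)
  qed
qed

lemma three_set: "{g i | i::nat. i < 3} = {g 0, g 1, g 2}"
proof -
  have e: "{i::nat. i < 3} = {0,1,2}" by (auto simp: lessThan_def[symmetric] lessThan_nat_numeral)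
  have "{g i | i::nat. i < 3} = g ` {i::nat. i < 3}" by auto
  also have "\<dots> = {g 0, g 1, g 2}" unfolding e by simp
  finally show ?thesis .
qed

lemma S3: "Suc 0 = 1" "Suc 1 = 2" "Suc 2 = 3" by auto

lemma PI_gen:
  assumes sym: "\<And>s t. E s t \<Longrightarrow> E t s" and irr: "\<And>s. \<not> E s s"
  shows "(if s \<noteq> t then adj E s x * adj E x y * adj E y t else 0) =
   (if s \<noteq> t \<and> s \<noteq> y \<and> x \<noteq> t then adj E s x * adj E x y * adj E y t else 0)
   + (if y = s then adj E s x * adj E s t else 0)
   + (if t = x then adj E s x * adj E x y else 0)
   - (if y = s \<and> t = x then adj E s x else (0::real))"
proof -
  have sE: "E a b = E b a" for a b using sym by blast
  show ?thesis
  proof (cases "y = s")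
    case True
    then show ?thesis
    proof (cases "t = x")
      case True
      then show ?thesis using \<open>y = s\<close> irr by (simp add: adj_def sE)
    next
      case False
      then show ?thesis using \<open>y = s\<close> irr by (simp add: adj_def sE)
    qed
  next
    case False
    then show ?thesis
    proof (cases "t = x")
      case True
      then show ?thesis using \<open>y \<noteq> s\<close> irr by (simp add: adj_def sE)
    next
      case False
      then show ?thesis using \<open>y \<noteq> s\<close> irr by (simp add: adj_def sE)
    qed
  qed
qed

locale sg =
  fixes V :: "'a::linorder set" and E :: "'a \<Rightarrow> 'a \<Rightarrow> bool"
  assumes G: "simple_graph V E"
begin

lemma fin: "finite V" and sym: "E s t \<Longrightarrow> E t s" and irr: "\<not> E s s"
  and inV: "E s t \<Longrightarrow> s \<in> V" "E s t \<Longrightarrow> t \<in> V"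
  using G unfolding simple_graph_def by blast+

lemma symE: "E s t = E t s" using sym by blast

definition "P = {(a,b,c,d). E a b \<and> E b c \<and> E c d \<and> a \<noteq> c \<and> a \<noteq> d \<and> b \<noteq> d}"

lemma P_sub: "P \<subseteq> V \<times> V \<times> V \<times> V"
  unfolding P_def using inV by auto

lemma finP: "finite P" using P_sub fin finite_subset by blast

definition "h1 = (\<lambda>(a,b,c,d). ({a,b,c,d::'a}, {{a,b},{b,c},{c,d}}))"

lemma edge_E: "{x,y} \<in> edges E \<Longrightarrow> E x y"
  unfolding edges_def by (auto simp: doubleton_eq_iff symE)

lemma E_edge: "E x y \<Longrightarrow> {x,y} \<in> edges E"
  unfolding edges_def by auto

lemma h1_image: "h1 ` P = P4_subgraphs V E"
proof
  show "h1 ` P \<subseteq> P4_subgraphs V E"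
  proof
    fix y assume "y \<in> h1 ` P"
    then obtain a b c d where p: "(a,b,c,d) \<in> P" and y: "y = h1 (a,b,c,d)" by auto
    from p have pp: "E a b" "E b c" "E c d" "a \<noteq> c" "a \<noteq> d" "b \<noteq> d" unfolding P_def by auto
    then have d: "a \<noteq> b" "b \<noteq> c" "c \<noteq> d" using irr by auto
    define f where "f = (\<lambda>i::nat. [a,b,c,d] ! i)"
    have f: "f 0 = a" "f 1 = b" "f 2 = c" "f 3 = d" unfolding f_def by (simp_all add: numeral_3_eq_3 numeral_2_eq_2)
    have I: "{0..<4::nat} = {0,1,2,3}" by auto
    have bj: "bij_betw f {0..<4} {a,b,c,d}"
      unfolding bij_betw_def I using pp d f by (simp add: inj_on_insert)
    have Fq: "{{a,b},{b,c},{c,d}} = {{f i, f (Suc i)} | i. i < 3}"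
      using three_set[of "\<lambda>i. {f i, f (Suc i)}"] unfolding S3 f by simp
    have Wv: "{a,b,c,d} \<subseteq> V" using pp inV by auto
    have Fe: "{{a,b},{b,c},{c,d}} \<subseteq> edges E" using pp E_edge by auto
    show "y \<in> P4_subgraphs V E" unfolding y h1_def P4_subgraphs_def mem_Collect_eq prod.case
      by (intro conjI exI[of _ f] Wv Fe bj Fq)
  qed
next
  show "P4_subgraphs V E \<subseteq> h1 ` P"
  proof
    fix y assume "y \<in> P4_subgraphs V E"
    moreover obtain W F where y: "y = (W,F)" by (cases y)
    ultimately have "W \<subseteq> V \<and> F \<subseteq> edges E \<and> (\<exists>f. bij_betw f {0..<4::nat} W \<and> F = {{f i, f (Suc i)} | i. i < 3})"
      unfolding P4_subgraphs_def by simp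
    then obtain f where W: "W \<subseteq> V" and F: "F \<subseteq> edges E"
      and bij: "bij_betw f {0..<4::nat} W" and Fd: "F = {{f i, f (Suc i)} | i. i < 3}"
      by blast
    have I: "{0..<4::nat} = {0,1,2,3}" by auto
    have F3: "F = {{f 0, f 1},{f 1, f 2},{f 2, f 3}}"
      using Fd three_set[of "\<lambda>i. {f i, f (Suc i)}"] unfolding S3 by simp
    have W4: "W = {f 0, f 1, f 2, f 3}" using bij unfolding bij_betw_def I by auto
    have inj: "inj_on f {0,1,2,3}" using bij unfolding bij_betw_def I by auto
    have dist: "f 0 \<noteq> f 2" "f 0 \<noteq> f 3" "f 1 \<noteq> f 3"
      using inj_onD[OF inj, of 0 2] inj_onD[OF inj, of 0 3] inj_onD[OF inj, of 1 3] by force+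
    have "{f 0, f 1} \<in> edges E" "{f 1, f 2} \<in> edges E" "{f 2, f 3} \<in> edges E"
      using F unfolding F3 by auto
    then have e: "E (f 0) (f 1)" "E (f 1) (f 2)" "E (f 2) (f 3)"
      using edge_E by blast+
    have "(f 0, f 1, f 2, f 3) \<in> P" unfolding P_def using e dist by auto
    moreover have "y = h1 (f 0, f 1, f 2, f 3)" unfolding y h1_def W4 F3 by simp
    ultimately show "y \<in> h1 ` P" by blast
  qed
qed

lemma h1_fiber:
  assumes p: "(a,b,c,d) \<in> P"
  shows "{x \<in> P. h1 x = h1 (a,b,c,d)} = {(a,b,c,d),(d,c,b,a)}"
proof -
  from p have pp: "E a b" "E b c" "E c d" "a \<noteq> c" "a \<noteq> d" "b \<noteq> d" unfolding P_def by auto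
  then have d: "a \<noteq> b" "b \<noteq> c" "c \<noteq> d" using irr by auto
  have r: "(d,c,b,a) \<in> P" using pp unfolding P_def by (auto simp: symE)
  have hr: "h1 (d,c,b,a) = h1 (a,b,c,d)" unfolding h1_def by (auto simp: insert_commute)
  show ?thesis
  proof
    show "{x \<in> P. h1 x = h1 (a,b,c,d)} \<subseteq> {(a,b,c,d),(d,c,b,a)}"
    proof
      fix x assume x: "x \<in> {x \<in> P. h1 x = h1 (a,b,c,d)}"
      obtain a' b' c' d' where xe: "x = (a',b',c',d')" by (cases x) auto
      from x have pp': "E a' b'" "E b' c'" "E c' d'" "a' \<noteq> c'" "a' \<noteq> d'" "b' \<noteq> d'" unfolding P_def xe by auto
      then have d': "a' \<noteq> b'" "b' \<noteq> c'" "c' \<noteq> d'" using irr by auto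
      from x have "{{a,b},{b,c},{c,d}} = {{a',b'},{b',c'},{c',d'}}" unfolding xe h1_def by auto
      from L1[OF d(1) pp(4) pp(5) d(2) pp(6) d(3) d'(1) pp'(4) pp'(5) d'(2) pp'(6) d'(3) this]
      show "x \<in> {(a,b,c,d),(d,c,b,a)}" unfolding xe by auto
    qed
  next
    have "(a,b,c,d) \<in> {x \<in> P. h1 x = h1 (a,b,c,d)}" using p by blast
    moreover have "(d,c,b,a) \<in> {x \<in> P. h1 x = h1 (a,b,c,d)}" using r hr by blast
    ultimately show "{(a,b,c,d),(d,c,b,a)} \<subseteq> {x \<in> P. h1 x = h1 (a,b,c,d)}"
      by (simp only: insert_subset empty_subsetI simp_thms)
  qed
qed

lemma partA: "2 * real (count_P4 V E) = real (card P)"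
proof -
  have "real (card P) = (\<Sum>x\<in>P. 1::real)" by simp
  also have "\<dots> = (\<Sum>y\<in>h1 ` P. \<Sum>x\<in>{x. x \<in> P \<and> h1 x = y}. 1::real)"
    using sum.group[OF finP finite_imageI[OF finP], where g=h1 and h="\<lambda>_. 1::real"] by simp
  also have "\<dots> = (\<Sum>y\<in>h1 ` P. 2::real)"
  proof (rule sum.cong[OF refl])
    fix y assume "y \<in> h1 ` P"
    then obtain a b c d where p: "(a,b,c,d) \<in> P" and y: "y = h1 (a,b,c,d)" by auto
    have "a \<noteq> d" using p unfolding P_def by auto
    then show "(\<Sum>x\<in>{x. x \<in> P \<and> h1 x = y}. 1::real) = 2"
      unfolding y h1_fiber[OF p, unfolded Set.mem_Collect_eq] using \<open>a \<noteq> d\<close> by simp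
  qed
  also have "\<dots> = 2 * real (count_P4 V E)" unfolding count_P4_def h1_image by simp
  finally show ?thesis by simp
qed


definition "T = {(s,t,u,v). E s t \<and> E u v \<and> s \<noteq> u \<and> s \<noteq> v \<and> t \<noteq> u \<and> t \<noteq> v}"

lemma finT: "finite T"
proof -
  have "T \<subseteq> V \<times> V \<times> V \<times> V" unfolding T_def using inV by auto
  then show ?thesis using fin finite_subset by blast
qed

definition "h2 = (\<lambda>(s,t,u,v). {{s,t},{u,v::'a}})"

definition "ef = (\<lambda>(s,t,u,v). adj E s u + adj E s v + adj E t u + adj E t v)"

lemma h2_image: "h2 ` T = Qpairs E"
  unfolding h2_def T_def Qpairs_def by auto

lemma T_dist: "(s,t,u,v) \<in> T \<Longrightarrow> s\<noteq>t \<and> s\<noteq>u \<and> s\<noteq>v \<and> t\<noteq>u \<and> t\<noteq>v \<and> u\<noteq>v"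
  unfolding T_def using irr by auto

lemma adj_sym: "adj E x y = adj E y x" unfolding adj_def using symE by simp

lemma ef_perm:
  assumes "(s',t',u',v') \<in> {(s,t,u,v),(t,s,u,v),(s,t,v,u),(t,s,v,u),(u,v,s,t),(v,u,s,t),(u,v,t,s),(v,u,t,s)}"
  shows "ef (s',t',u',v') = ef (s,t,u,v)"
  using assms unfolding ef_def by (auto simp: adj_sym)

lemma cross_h2:
  assumes x: "(s,t,u,v) \<in> T"
  shows "cross E (h2 (s,t,u,v)) = ef (s,t,u,v)"
proof -
  have d: "s\<noteq>t" "s\<noteq>u" "s\<noteq>v" "t\<noteq>u" "t\<noteq>v" "u\<noteq>v" using T_dist[OF x] by auto
  have x': "E s t" "E u v" using x unfolding T_def by auto
  show ?thesis unfolding cross_def h2_def prod.case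
  proof (rule someI2)
    show "\<exists>s' t' u' v'. {{s,t},{u,v}} = {{s',t'},{u',v'}} \<and> E s' t' \<and> E u' v' \<and>
       s' \<noteq> u' \<and> s' \<noteq> v' \<and> t' \<noteq> u' \<and> t' \<noteq> v' \<and>
       ef (s,t,u,v) = adj E s' u' + adj E s' v' + adj E t' u' + adj E t' v'"
      using d x' unfolding ef_def by auto
  next
    fix c assume "\<exists>s' t' u' v'. {{s,t},{u,v}} = {{s',t'},{u',v'}} \<and> E s' t' \<and> E u' v' \<and>
       s' \<noteq> u' \<and> s' \<noteq> v' \<and> t' \<noteq> u' \<and> t' \<noteq> v' \<and>
       c = adj E s' u' + adj E s' v' + adj E t' u' + adj E t' v'"
    then obtain s' t' u' v' where eq: "{{s,t},{u,v}} = {{s',t'},{u',v'}}"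
      and c: "c = adj E s' u' + adj E s' v' + adj E t' u' + adj E t' v'" by blast
    have "ef (s',t',u',v') = ef (s,t,u,v)" by (rule ef_perm[OF L3[OF d eq]])
    then show "c = ef (s,t,u,v)" using c unfolding ef_def by simp
  qed
qed

lemma h2_fiber:
  assumes x: "(s,t,u,v) \<in> T"
  shows "{y \<in> T. h2 y = h2 (s,t,u,v)} = {(s,t,u,v),(t,s,u,v),(s,t,v,u),(t,s,v,u),(u,v,s,t),(v,u,s,t),(u,v,t,s),(v,u,t,s)}"
    (is "?L = ?R")
proof -
  have d: "s\<noteq>t" "s\<noteq>u" "s\<noteq>v" "t\<noteq>u" "t\<noteq>v" "u\<noteq>v" using T_dist[OF x] by auto
  show ?thesis
  proof
  show "?L \<subseteq> ?R"
  proof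
    fix y assume y: "y \<in> ?L"
    obtain s' t' u' v' where ye: "y = (s',t',u',v')" by (cases y) auto
    from y have "{{s,t},{u,v}} = {{s',t'},{u',v'}}" unfolding ye h2_def by simp
    from L3[OF d this] show "y \<in> ?R" unfolding ye .
  qed
next
  have x': "E s t" "E u v" using x unfolding T_def by auto
  have "?R \<subseteq> T" using d x' unfolding T_def by (auto simp: symE)
  moreover have "\<forall>y\<in>?R. h2 y = h2 (s,t,u,v)" unfolding h2_def by (auto simp: insert_commute)
  ultimately show "?R \<subseteq> ?L" by blast
qed
qed

lemma card8:
  assumes "s\<noteq>t" "s\<noteq>u" "s\<noteq>v" "t\<noteq>u" "t\<noteq>v" "u\<noteq>v"
  shows "card {(s,t,u,v),(t,s,u,v),(s,t,v,u),(t,s,v,u),(u,v,s,t),(v,u,s,t),(u,v,t,s),(v,u,t,s)} = 8"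
  using assms by simp

lemma sumT_ef: "(\<Sum>x\<in>T. ef x) = 8 * (\<Sum>q\<in>Qpairs E. cross E q)"
proof -
  have "(\<Sum>x\<in>T. ef x) = (\<Sum>q\<in>h2 ` T. \<Sum>x\<in>{x. x \<in> T \<and> h2 x = q}. ef x)"
    using sum.group[OF finT finite_imageI[OF finT], where g=h2 and h=ef] by simp
  also have "\<dots> = (\<Sum>q\<in>h2 ` T. 8 * cross E q)"
  proof (rule sum.cong[OF refl])
    fix q assume "q \<in> h2 ` T"
    then obtain s t u v where x: "(s,t,u,v) \<in> T" and q: "q = h2 (s,t,u,v)" by auto
    have d: "s\<noteq>t" "s\<noteq>u" "s\<noteq>v" "t\<noteq>u" "t\<noteq>v" "u\<noteq>v" using T_dist[OF x] by auto
    have "(\<Sum>y\<in>{y. y \<in> T \<and> h2 y = q}. ef y) = (\<Sum>y\<in>{y. y \<in> T \<and> h2 y = q}. cross E q)"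
    proof (rule sum.cong[OF refl])
      fix y assume y: "y \<in> {y. y \<in> T \<and> h2 y = q}"
      obtain s' t' u' v' where ye: "y = (s',t',u',v')" by (cases y) auto
      from y have "cross E q = ef y" unfolding ye using cross_h2[of s' t' u' v'] by auto
      then show "ef y = cross E q" by simp
    qed
    also have "\<dots> = 8 * cross E q"
      unfolding q h2_fiber[OF x, unfolded Set.mem_Collect_eq] card8[OF d] using card8[OF d] by simp
    finally show "(\<Sum>y\<in>{y. y \<in> T \<and> h2 y = q}. ef y) = 8 * cross E q" .
  qed
  also have "\<dots> = 8 * (\<Sum>q\<in>Qpairs E. cross E q)" unfolding h2_image by (simp add: sum_distrib_left)
  finally show ?thesis .
qed

lemma sum_adj_card:
  assumes "finite A"
  shows "(\<Sum>x\<in>A. if Q x then 1 else 0::real) = real (card {x\<in>A. Q x})"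
  using assms by (simp add: sum.If_cases Int_def)

lemma sumT_tu: "(\<Sum>(s,t,u,v)\<in>T. adj E t u) = real (card P)"
proof -
  have "(\<Sum>(s,t,u,v)\<in>T. adj E t u) = (\<Sum>x\<in>T. if (case x of (s,t,u,v) \<Rightarrow> E t u) then 1 else 0::real)"
    by (rule sum.cong) (auto simp: adj_def)
  also have "\<dots> = real (card {x\<in>T. case x of (s,t,u,v) \<Rightarrow> E t u})" by (rule sum_adj_card[OF finT])
  also have "{x\<in>T. case x of (s,t,u,v) \<Rightarrow> E t u} = P" unfolding T_def P_def using irr by auto
  finally show ?thesis .
qed

lemma sumT_ef4: "(\<Sum>x\<in>T. ef x) = 4 * real (card P)"
proof -
  have T1: "(\<Sum>(s,t,u,v)\<in>T. adj E s u) = (\<Sum>(s,t,u,v)\<in>T. adj E t u)"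
    by (rule sum.reindex_bij_witness[where i="\<lambda>(s,t,u,v). (t,s,u,v)" and j="\<lambda>(s,t,u,v). (t,s,u,v)"])
       (auto simp: T_def intro: sym)
  have T2: "(\<Sum>(s,t,u,v)\<in>T. adj E t v) = (\<Sum>(s,t,u,v)\<in>T. adj E t u)"
    by (rule sum.reindex_bij_witness[where i="\<lambda>(s,t,u,v). (s,t,v,u)" and j="\<lambda>(s,t,u,v). (s,t,v,u)"])
       (auto simp: T_def intro: sym)
  have T3: "(\<Sum>(s,t,u,v)\<in>T. adj E s v) = (\<Sum>(s,t,u,v)\<in>T. adj E t u)"
    by (rule sum.reindex_bij_witness[where i="\<lambda>(s,t,u,v). (t,s,v,u)" and j="\<lambda>(s,t,u,v). (t,s,v,u)"])
       (auto simp: T_def intro: sym)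
  have "(\<Sum>x\<in>T. ef x) = (\<Sum>(s,t,u,v)\<in>T. adj E s u) + (\<Sum>(s,t,u,v)\<in>T. adj E s v)
      + (\<Sum>(s,t,u,v)\<in>T. adj E t u) + (\<Sum>(s,t,u,v)\<in>T. adj E t v)"
    unfolding ef_def by (simp add: sum.distrib split_def)
  then show ?thesis using T1 T2 T3 sumT_tu by simp
qed

lemma partB: "2 * (\<Sum>q\<in>Qpairs E. cross E q) = real (card P)"
  using sumT_ef sumT_ef4 by simp


abbreviation "a \<equiv> adj E"
definition "k x = (\<Sum>y\<in>V. adj E x y)"

lemma if01: "(if Pb then 1 else 0) * (c::real) = (if Pb then c else 0)" by simp
lemma sum_if_const: "(\<Sum>t\<in>A. if c then f t else 0) = (if c then (\<Sum>t\<in>A. f t) else (0::real))"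
  by (cases c) simp_all

lemma adj_irr: "adj E x x = 0" unfolding adj_def using irr by simp

lemma deg: "real (degree V E s) = k s"
proof -
  have "k s = (\<Sum>t\<in>V. if E s t then 1 else 0)" unfolding k_def adj_def by simp
  also have "\<dots> = real (card {t\<in>V. E s t})" by (rule sum_adj_card[OF fin])
  finally show ?thesis unfolding degree_def by simp
qed

lemma k_col: "(\<Sum>s\<in>V. adj E s x) = k x"
  unfolding k_def by (simp add: adj_sym)

lemma adjpow1: "s \<in> V \<Longrightarrow> adjpow V E 1 s t = adj E s t"
  using fin by (simp add: if01 sum.delta)

lemma adjpow2: "s \<in> V \<Longrightarrow> adjpow V E 2 s w = (\<Sum>x\<in>V. adj E s x * adj E x w)"
  by (simp add: numeral_2_eq_2 if01 sum.delta fin)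

lemma adjpow3: "s \<in> V \<Longrightarrow> adjpow V E 3 s t = (\<Sum>x\<in>V. \<Sum>y\<in>V. adj E s x * adj E x y * adj E y t)"
proof -
  assume s: "s \<in> V"
  have e3: "(3::nat) = Suc 2" by simp
  have "adjpow V E 3 s t = (\<Sum>y\<in>V. adjpow V E 2 s y * adj E y t)"
    unfolding e3 adjpow.simps(2) ..
  also have "\<dots> = (\<Sum>y\<in>V. \<Sum>x\<in>V. adj E s x * adj E x y * adj E y t)"
    using s by (simp add: adjpow2 sum_distrib_right)
  also have "\<dots> = (\<Sum>x\<in>V. \<Sum>y\<in>V. adj E s x * adj E x y * adj E y t)"
    by (rule sum.swap)
  finally show ?thesis .
qed

lemma adjpow3_sym: "s \<in> V \<Longrightarrow> t \<in> V \<Longrightarrow> adjpow V E 3 s t = adjpow V E 3 t s"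
proof -
  assume s: "s \<in> V" and t: "t \<in> V"
  have "adjpow V E 3 t s = (\<Sum>x\<in>V. \<Sum>y\<in>V. adj E t x * adj E x y * adj E y s)" using adjpow3[OF t] .
  also have "\<dots> = (\<Sum>y\<in>V. \<Sum>x\<in>V. adj E t x * adj E x y * adj E y s)" by (rule sum.swap)
  also have "\<dots> = (\<Sum>y\<in>V. \<Sum>x\<in>V. adj E s y * adj E y x * adj E x t)"
    by (simp add: adj_sym mult.commute mult.left_commute)
  also have "\<dots> = adjpow V E 3 s t" using adjpow3[OF s] by simp
  finally show ?thesis by simp
qed

lemma nest4: "(\<Sum>p\<in>V \<times> V \<times> V \<times> V. g p) = (\<Sum>s\<in>V. \<Sum>x\<in>V. \<Sum>y\<in>V. \<Sum>t\<in>V. g (s,x,y,t))"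
  by (simp add: sum.cartesian_product')

lemma cardP_sum: "real (card P) = (\<Sum>s\<in>V. \<Sum>x\<in>V. \<Sum>y\<in>V. \<Sum>t\<in>V.
     if s \<noteq> t \<and> s \<noteq> y \<and> x \<noteq> t then adj E s x * adj E x y * adj E y t else 0)"
proof -
  have "{p \<in> V \<times> V \<times> V \<times> V. p \<in> P} = P" using P_sub by blast
  then have "real (card P) = (\<Sum>p\<in>V \<times> V \<times> V \<times> V. if p \<in> P then 1 else 0)"
    using sum_adj_card[of "V \<times> V \<times> V \<times> V" "\<lambda>p. p \<in> P"] fin by simp
  also have "\<dots> = (\<Sum>s\<in>V. \<Sum>x\<in>V. \<Sum>y\<in>V. \<Sum>t\<in>V. if (s,x,y,t) \<in> P then 1 else 0)"
    by (rule nest4)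
  also have "\<dots> = (\<Sum>s\<in>V. \<Sum>x\<in>V. \<Sum>y\<in>V. \<Sum>t\<in>V.
     if s \<noteq> t \<and> s \<noteq> y \<and> x \<noteq> t then adj E s x * adj E x y * adj E y t else 0)"
    unfolding P_def adj_def by (intro sum.cong refl) auto
  finally show ?thesis .
qed

lemma PI: "(if s \<noteq> t then adj E s x * adj E x y * adj E y t else 0) =
   (if s \<noteq> t \<and> s \<noteq> y \<and> x \<noteq> t then adj E s x * adj E x y * adj E y t else 0)
   + (if y = s then adj E s x * adj E s t else 0)
   + (if t = x then adj E s x * adj E x y else 0)
   - (if y = s \<and> t = x then adj E s x else 0)"
  by (rule PI_gen[OF sym irr])

lemma S1: "(\<Sum>s\<in>V. \<Sum>x\<in>V. \<Sum>y\<in>V. \<Sum>t\<in>V. if y = s then adj E s x * adj E s t else 0)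
   = (\<Sum>s\<in>V. k s * k s)"
proof -
  have "\<And>s. (\<Sum>x\<in>V. \<Sum>t\<in>V. adj E s x * adj E s t) = k s * k s"
    by (simp add: k_def sum_product)
  then show ?thesis by (simp add: sum_if_const sum.delta fin)
qed

lemma S2: "(\<Sum>s\<in>V. \<Sum>x\<in>V. \<Sum>y\<in>V. \<Sum>t\<in>V. if t = x then adj E s x * adj E x y else 0)
   = (\<Sum>s\<in>V. k s * k s)"
proof -
  have "(\<Sum>s\<in>V. \<Sum>x\<in>V. \<Sum>y\<in>V. \<Sum>t\<in>V. if t = x then adj E s x * adj E x y else 0)
     = (\<Sum>s\<in>V. \<Sum>x\<in>V. adj E s x * k x)"
    by (simp add: sum.delta fin k_def sum_distrib_left)
  also have "\<dots> = (\<Sum>x\<in>V. \<Sum>s\<in>V. adj E s x * k x)" by (rule sum.swap)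
  also have "\<dots> = (\<Sum>x\<in>V. k x * k x)" by (simp add: sum_distrib_right[symmetric] k_col)
  finally show ?thesis .
qed

lemma SS3: "(\<Sum>s\<in>V. \<Sum>x\<in>V. \<Sum>y\<in>V. \<Sum>t\<in>V. if y = s \<and> t = x then adj E s x else 0)
   = (\<Sum>s\<in>V. k s)"
proof -
  have "\<And>s x y t. (if y = s \<and> t = x then adj E s x else 0) = (if y = s then (if t = x then adj E s x else 0) else 0)"
    by simp
  then show ?thesis by (simp add: sum_if_const sum.delta fin k_def)
qed

lemma S4: "(\<Sum>s\<in>V. \<Sum>t\<in>V. adj E s t * (2 * k t - 1)) = 2 * (\<Sum>t\<in>V. k t * k t) - (\<Sum>t\<in>V. k t)"
proof -
  have "(\<Sum>s\<in>V. \<Sum>t\<in>V. adj E s t * (2 * k t - 1)) = (\<Sum>t\<in>V. \<Sum>s\<in>V. adj E s t * (2 * k t - 1))"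
    by (rule sum.swap)
  also have "\<dots> = (\<Sum>t\<in>V. k t * (2 * k t - 1))" by (simp add: sum_distrib_right[symmetric] k_col)
  also have "\<dots> = 2 * (\<Sum>t\<in>V. k t * k t) - (\<Sum>t\<in>V. k t)"
    by (simp add: algebra_simps sum_subtractf sum_distrib_left)
  finally show ?thesis .
qed

definition "D3 = (\<Sum>s\<in>V. \<Sum>t\<in>V. if s \<noteq> t then adjpow V E 3 s t else 0)"

lemma D3_expand: "D3 = (\<Sum>s\<in>V. \<Sum>x\<in>V. \<Sum>y\<in>V. \<Sum>t\<in>V. if s \<noteq> t then adj E s x * adj E x y * adj E y t else 0)"
proof -
  have "\<And>s. s \<in> V \<Longrightarrow> (\<Sum>t\<in>V. if s \<noteq> t then adjpow V E 3 s t else 0)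
     = (\<Sum>x\<in>V. \<Sum>y\<in>V. \<Sum>t\<in>V. if s \<noteq> t then adj E s x * adj E x y * adj E y t else 0)"
  proof -
    fix s assume s: "s \<in> V"
    have "(\<Sum>t\<in>V. if s \<noteq> t then adjpow V E 3 s t else 0)
       = (\<Sum>t\<in>V. \<Sum>x\<in>V. \<Sum>y\<in>V. if s \<noteq> t then adj E s x * adj E x y * adj E y t else 0)"
      unfolding adjpow3[OF s] by (simp add: sum_if_const)
    also have "\<dots> = (\<Sum>x\<in>V. \<Sum>t\<in>V. \<Sum>y\<in>V. if s \<noteq> t then adj E s x * adj E x y * adj E y t else 0)"
      by (rule sum.swap)
    also have "\<dots> = (\<Sum>x\<in>V. \<Sum>y\<in>V. \<Sum>t\<in>V. if s \<noteq> t then adj E s x * adj E x y * adj E y t else 0)"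
      by (rule sum.cong[OF refl], rule sum.swap)
    finally show "?thesis s" .
  qed
  then show ?thesis unfolding D3_def by (rule sum.cong[OF refl])
qed

lemma D3_val: "D3 = real (card P) + 2 * (\<Sum>s\<in>V. k s * k s) - (\<Sum>s\<in>V. k s)"
proof -
  have "D3 = (\<Sum>s\<in>V. \<Sum>x\<in>V. \<Sum>y\<in>V. \<Sum>t\<in>V.
     (if s \<noteq> t \<and> s \<noteq> y \<and> x \<noteq> t then adj E s x * adj E x y * adj E y t else 0)
   + (if y = s then adj E s x * adj E s t else 0)
   + (if t = x then adj E s x * adj E x y else 0)
   - (if y = s \<and> t = x then adj E s x else 0))"
    unfolding D3_expand PI ..
  also have "\<dots> = (\<Sum>s\<in>V. \<Sum>x\<in>V. \<Sum>y\<in>V. \<Sum>t\<in>V.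
     (if s \<noteq> t \<and> s \<noteq> y \<and> x \<noteq> t then adj E s x * adj E x y * adj E y t else 0))
   + (\<Sum>s\<in>V. \<Sum>x\<in>V. \<Sum>y\<in>V. \<Sum>t\<in>V. (if y = s then adj E s x * adj E s t else 0))
   + (\<Sum>s\<in>V. \<Sum>x\<in>V. \<Sum>y\<in>V. \<Sum>t\<in>V. (if t = x then adj E s x * adj E x y else 0))
   - (\<Sum>s\<in>V. \<Sum>x\<in>V. \<Sum>y\<in>V. \<Sum>t\<in>V. (if y = s \<and> t = x then adj E s x else 0))"
    by (simp only: sum.distrib sum_subtractf)
  also have "\<dots> = real (card P) + (\<Sum>s\<in>V. k s * k s) + (\<Sum>s\<in>V. k s * k s) - (\<Sum>s\<in>V. k s)"
    unfolding cardP_sum S1 S2 SS3 ..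
  finally show ?thesis by simp
qed

lemma LHS_val: "(\<Sum>s\<in>V. \<Sum>t\<in>V - {s}. adjpow V E 3 s t - adj E s t * (2 * real (degree V E t) - 1))
   = D3 - (2 * (\<Sum>t\<in>V. k t * k t) - (\<Sum>t\<in>V. k t))"
proof -
  have "\<And>s. (\<Sum>t\<in>V - {s}. adjpow V E 3 s t - adj E s t * (2 * real (degree V E t) - 1))
     = (\<Sum>t\<in>V. if s \<noteq> t then adjpow V E 3 s t else 0) - (\<Sum>t\<in>V. adj E s t * (2 * k t - 1))"
  proof -
    fix s
    have e: "V - {s} = {t \<in> V. s \<noteq> t}" by auto
    have "(\<Sum>t\<in>V - {s}. adjpow V E 3 s t - adj E s t * (2 * real (degree V E t) - 1))
      = (\<Sum>t\<in>V. if s \<noteq> t then adjpow V E 3 s t - adj E s t * (2 * k t - 1) else 0)"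
      unfolding e using fin by (simp add: sum.inter_filter deg)
    also have "\<dots> = (\<Sum>t\<in>V. (if s \<noteq> t then adjpow V E 3 s t else 0) - adj E s t * (2 * k t - 1))"
      by (rule sum.cong[OF refl]) (auto simp: adj_irr)
    finally show "?thesis s" by (simp add: sum_subtractf)
  qed
  then show ?thesis unfolding D3_def S4[symmetric] by (simp add: sum_subtractf)
qed

lemma partC: "(\<Sum>s\<in>V. \<Sum>t\<in>V - {s}. adjpow V E 3 s t - adj E s t * (2 * real (degree V E t) - 1))
   = real (card P)"
  unfolding LHS_val D3_val by simp

lemma sym_pairs:
  assumes sf: "\<And>s t. s \<in> V \<Longrightarrow> t \<in> V \<Longrightarrow> f s t = f t s"
  shows "2 * (\<Sum>(s,t)\<in>{(s,t). s \<in> V \<and> t \<in> V \<and> s < t}. f s t) = (\<Sum>s\<in>V. \<Sum>t\<in>V. if s \<noteq> t then f s t else (0::real))"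
proof -
  have e: "{(s,t). s \<in> V \<and> t \<in> V \<and> s < t} = {p \<in> V \<times> V. fst p < snd p}" by auto
  have L: "(\<Sum>(s,t)\<in>{(s,t). s \<in> V \<and> t \<in> V \<and> s < t}. f s t) = (\<Sum>s\<in>V. \<Sum>t\<in>V. if s < t then f s t else 0)"
  proof -
    have "(\<Sum>(s,t)\<in>{p \<in> V \<times> V. fst p < snd p}. f s t) = (\<Sum>p\<in>V \<times> V. if fst p < snd p then f (fst p) (snd p) else 0)"
      using fin by (simp add: sum.inter_filter split_def)
    also have "\<dots> = (\<Sum>s\<in>V. \<Sum>t\<in>V. if s < t then f s t else 0)"
      by (simp only: sum.cartesian_product' fst_conv snd_conv)
    finally show ?thesis unfolding e .
  qed
  have "(\<Sum>s\<in>V. \<Sum>t\<in>V. if t < s then f s t else 0) = (\<Sum>t\<in>V. \<Sum>s\<in>V. if t < s then f s t else 0)"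
    by (rule sum.swap)
  also have "\<dots> = (\<Sum>t\<in>V. \<Sum>s\<in>V. if t < s then f t s else 0)"
    using sf by (intro sum.cong refl) auto
  finally have G: "(\<Sum>s\<in>V. \<Sum>t\<in>V. if t < s then f s t else 0) = (\<Sum>s\<in>V. \<Sum>t\<in>V. if s < t then f s t else 0)" .
  have "(\<Sum>s\<in>V. \<Sum>t\<in>V. if s \<noteq> t then f s t else (0::real)) =
     (\<Sum>s\<in>V. \<Sum>t\<in>V. (if s < t then f s t else 0) + (if t < s then f s t else 0))"
    by (intro sum.cong refl) auto
  also have "\<dots> = 2 * (\<Sum>s\<in>V. \<Sum>t\<in>V. if s < t then f s t else 0)"
    using G by (simp add: sum.distrib)
  finally show ?thesis using L by simp
qed

lemma m3: "2 * mp V E 3 = D3"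
  unfolding mp_def D3_def by (rule sym_pairs) (rule adjpow3_sym)

lemma m1: "2 * mp V E 1 = (\<Sum>s\<in>V. k s)"
proof -
  have "2 * mp V E 1 = (\<Sum>s\<in>V. \<Sum>t\<in>V. if s \<noteq> t then adjpow V E 1 s t else 0)"
    unfolding mp_def by (rule sym_pairs) (simp add: if01 sum.delta fin adj_sym)
  also have "\<dots> = (\<Sum>s\<in>V. \<Sum>t\<in>V. adj E s t)"
    by (intro sum.cong refl) (auto simp: if01 sum.delta fin adj_irr)
  finally show ?thesis unfolding k_def .
qed

lemma msq: "real (card V) * mean_sq_degree V E = (\<Sum>s\<in>V. k s * k s)"
proof (cases "card V = 0")
  case True
  then have "V = {}" using fin by simp
  then show ?thesis by simp
next
  case False
  then show ?thesis unfolding mean_sq_degree_def by (simp add: deg power2_eq_square)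
qed

lemma partD: "(1/2) * (\<Sum>s\<in>V. \<Sum>t\<in>V - {s}. adjpow V E 3 s t - adj E s t * (2 * real (degree V E t) - 1))
   = mp V E 3 + mp V E 1 - real (card V) * mean_sq_degree V E"
  unfolding LHS_val msq using m3 m1 by simp

end

theorem proposition1:
  fixes V :: "'a::linorder set" and E :: "'a \<Rightarrow> 'a \<Rightarrow> bool"
  assumes "simple_graph V E"
  shows "real (count_P4 V E) = (\<Sum>q\<in>Qpairs E. cross E q)
       \<and> (\<Sum>q\<in>Qpairs E. cross E q)
           = (1/2) * (\<Sum>s\<in>V. \<Sum>t\<in>V - {s}.
                 adjpow V E 3 s t - adj E s t * (2 * real (degree V E t) - 1))
       \<and> (1/2) * (\<Sum>s\<in>V. \<Sum>t\<in>V - {s}.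
                 adjpow V E 3 s t - adj E s t * (2 * real (degree V E t) - 1))
           = mp V E 3 + mp V E 1 - real (card V) * mean_sq_degree V E"
proof -
  interpret sg V E by (rule sg.intro) (rule assms)
  show ?thesis using partA partB partC partD by simp
qed

end
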